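(* Let $W$ be an ordered vector space which is monotone complete and which carries a faithful normal positive linear functional. Then every vector subspace $V$ of $W$ which is monotone sequentially closed in $W$ is monotone closed in $W$.
   Context: An ordered vector space $W$ is called monotone complete if every non-empty upper bounded upward directed subset of $W$ has a supremum in $W$ (in particular every upper bounded increasing sequence in $W$ has a supremum in $W$). For a vector subspace $V$ of such $W$: $V$ is monotone closed in $W$ if $V$ contains the supremum in $W$ of every non-empty upward directed subset of $V$ that is upper bounded in $W$; $V$ is monotone sequentially closed in $W$ if $V$ contains the supremum in $W$ of every increasing sequence in $V$ that is upper bounded in $W$. A positive linear functional $\psi$ on $W$ is faithful if $\psi(a)>0$ for every positive $a\neq 0$ in $W$, and normal if $\psi(\sup J)=\sup_{j\in J}\psi(j)$ for every non-empty upper bounded upward directed subset $J$ of $W$. *)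

theory Defs
  imports "HOL-Analysis.Analysis"
begin

definition up_directed :: "'a::order set \<Rightarrow> bool" where
  "up_directed J \<longleftrightarrow> (\<forall>a\<in>J. \<forall>b\<in>J. \<exists>c\<in>J. a \<le> c \<and> b \<le> c)"

definition is_sup :: "'a::order set \<Rightarrow> 'a \<Rightarrow> bool" where
  "is_sup J s \<longleftrightarrow> (\<forall>j\<in>J. j \<le> s) \<and> (\<forall>u. (\<forall>j\<in>J. j \<le> u) \<longrightarrow> s \<le> u)"

definition monotone_complete :: "'a::order itself \<Rightarrow> bool" where
  "monotone_complete _ \<longleftrightarrow>
     (\<forall>J::'a set. J \<noteq> {} \<and> up_directed J \<and> bdd_above J \<longrightarrow> (\<exists>s. is_sup J s))"

definition monotone_closed :: "'a::order set \<Rightarrow> bool" where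
  "monotone_closed V \<longleftrightarrow>
     (\<forall>J s. J \<subseteq> V \<and> J \<noteq> {} \<and> up_directed J \<and> is_sup J s \<longrightarrow> s \<in> V)"

definition monotone_seq_closed :: "'a::order set \<Rightarrow> bool" where
  "monotone_seq_closed V \<longleftrightarrow>
     (\<forall>(f::nat \<Rightarrow> 'a) s. (\<forall>n. f n \<in> V) \<and> incseq f \<and> is_sup (range f) s \<longrightarrow> s \<in> V)"

definition positive_functional :: "('a::ordered_real_vector \<Rightarrow> real) \<Rightarrow> bool" where
  "positive_functional \<psi> \<longleftrightarrow> linear \<psi> \<and> (\<forall>a. 0 \<le> a \<longrightarrow> 0 \<le> \<psi> a)"

definition faithful :: "('a::ordered_real_vector \<Rightarrow> real) \<Rightarrow> bool" where
  "faithful \<psi> \<longleftrightarrow> (\<forall>a. 0 \<le> a \<and> a \<noteq> 0 \<longrightarrow> \<psi> a > 0)"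

definition normal :: "('a::ordered_real_vector \<Rightarrow> real) \<Rightarrow> bool" where
  "normal \<psi> \<longleftrightarrow>
     (\<forall>J s. J \<noteq> {} \<and> up_directed J \<and> is_sup J s \<longrightarrow> \<psi> s = (SUP j\<in>J. \<psi> j))"

end

theory Submission
  imports Defs
begin

theorem corollary1:
  fixes \<psi> :: "'a::ordered_real_vector \<Rightarrow> real"
    and V :: "'a set"
  assumes "monotone_complete TYPE('a)"
    and "positive_functional \<psi>" and "faithful \<psi>" and "normal \<psi>"
    and "subspace V"
    and "monotone_seq_closed V"
  shows "monotone_closed V"
  unfolding monotone_closed_def
proof (intro allI impI)
  fix J s assume H: "J \<subseteq> V \<and> J \<noteq> {} \<and> up_directed J \<and> is_sup J s"
  have lin: "linear \<psi>" and pos: "\<And>a. 0 \<le> a \<Longrightarrow> 0 \<le> \<psi> a"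
    using assms(2) unfolding positive_functional_def by auto
  have mono: "\<psi> a \<le> \<psi> b" if "a \<le> b" for a b
  proof -
    have "0 \<le> \<psi> (b - a)" using pos that by simp
    thus ?thesis using linear_diff[OF lin] by simp
  qed
  have ub: "\<And>j. j \<in> J \<Longrightarrow> j \<le> s" and least: "\<And>u. (\<forall>j\<in>J. j \<le> u) \<Longrightarrow> s \<le> u"
    using H unfolding is_sup_def by auto
  have ps: "\<psi> s = (SUP j\<in>J. \<psi> j)" using assms(4) H unfolding normal_def by blast
  have bdd: "bdd_above (\<psi> ` J)" using ub mono by (auto intro!: bdd_aboveI)
  have "\<exists>x. x \<in> J \<and> \<psi> s - 1 / (real n + 1) < \<psi> x" for n
  proof -
    have "\<psi> s - 1 / (real n + 1) < (SUP j\<in>J. \<psi> j)" using ps by simp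
    then show ?thesis using less_cSUP_iff[OF _ bdd] H by auto
  qed
  then obtain j where j: "\<And>n. j n \<in> J" "\<And>n. \<psi> s - 1 / (real n + 1) < \<psi> (j n)"
    by metis
  define k where "k = rec_nat (j 0) (\<lambda>n x. SOME c. c \<in> J \<and> x \<le> c \<and> j (Suc n) \<le> c)"
  have k0: "k 0 = j 0" and kS: "\<And>n. k (Suc n) = (SOME c. c \<in> J \<and> k n \<le> c \<and> j (Suc n) \<le> c)"
    unfolding k_def by simp_all
  have kJ: "k n \<in> J \<and> j n \<le> k n" for n
  proof (induction n)
    case 0 then show ?case using k0 j by simp
  next
    case (Suc n)
    have "\<exists>c. c \<in> J \<and> k n \<le> c \<and> j (Suc n) \<le> c"
      using H Suc j(1)[of "Suc n"] unfolding up_directed_def by blast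
    then show ?case unfolding kS by (metis (mono_tags, lifting) someI_ex)
  qed
  have kstep: "k n \<le> k (Suc n)" for n
  proof -
    have "\<exists>c. c \<in> J \<and> k n \<le> c \<and> j (Suc n) \<le> c"
      using H kJ j(1)[of "Suc n"] unfolding up_directed_def by blast
    then show ?thesis unfolding kS by (metis (mono_tags, lifting) someI_ex)
  qed
  have inc: "incseq k" using kstep by (simp add: incseq_SucI)
  have dir: "up_directed (range k)" unfolding up_directed_def
    using inc by (metis rangeE rangeI incseqD nat_le_linear)
  have "bdd_above (range k)" using ub kJ by (auto intro!: bdd_aboveI)
  then obtain t where t: "is_sup (range k) t"
    using assms(1) dir unfolding monotone_complete_def by blast
  have tV: "t \<in> V" using assms(6) t inc kJ H unfolding monotone_seq_closed_def by blast
  have ts: "t \<le> s" using t ub kJ unfolding is_sup_def by auto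
  have kt: "k n \<le> t" for n using t unfolding is_sup_def by auto
  have d: "\<psi> s - \<psi> t < 1 / (real n + 1)" for n
  proof -
    have "\<psi> (j n) \<le> \<psi> t" using mono kJ kt order_trans by blast
    then show ?thesis using j(2)[of n] by simp
  qed
  have "\<psi> (s - t) \<le> 0"
  proof (rule ccontr)
    assume "\<not> \<psi> (s - t) \<le> 0"
    then have "0 < \<psi> s - \<psi> t" using linear_diff[OF lin] by simp
    then obtain n where "inverse (real (Suc n)) < \<psi> s - \<psi> t"
      using reals_Archimedean by blast
    then show False using d[of n] by (simp add: field_simps)
  qed
  moreover have "0 \<le> s - t" using ts by simp
  ultimately have "s - t = 0" using assms(3) unfolding faithful_def by (meson not_le)
  then show "s \<in> V" using tV by simp
qed

end
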